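(* Let $r,s$ be real numbers with $s\ge 1$ and $r\le s-1$, and let $G$ be a finite group. Then $T_G(r,s)\le 0$, with equality if and only if $G$ is cyclic.
   Context: $o(x)$ is the order of $x$, $\varphi$ is Euler's totient function, and $C_N$ is the cyclic group of order $N$. For a finite group $G$ and reals $r,s$, $R_G(r,s) := \sum_{x\in G} \frac{o(x)^s}{\varphi(o(x))^r}$ and $T_G(r,s) := R_G(r,s) - R_{C_{|G|}}(r,s)$. *)

theory Defs
  imports "HOL-Algebra.Elementary_Groups" "HOL-Algebra.Multiplicative_Group" "HOL-Number_Theory.Number_Theory"
begin

definition R_sum :: "('a, 'b) monoid_scheme \<Rightarrow> real \<Rightarrow> real \<Rightarrow> real" where
  "R_sum G r s = (\<Sum>x\<in>carrier G. real (group.ord G x) powr s / real (totient (group.ord G x)) powr r)"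

definition T_diff :: "('a, 'b) monoid_scheme \<Rightarrow> real \<Rightarrow> real \<Rightarrow> real" where
  "T_diff G r s = R_sum G r s - R_sum (integer_mod_group (order G)) r s"

end

theory Submission
  imports Defs
begin



definition wf :: "real \<Rightarrow> real \<Rightarrow> nat \<Rightarrow> real" where
  "wf r s d = real d powr s / real (totient d) powr r"

definition Wf :: "real \<Rightarrow> real \<Rightarrow> nat \<Rightarrow> real" where
  "Wf r s n = (\<Sum>d | d dvd n. real (totient d) * wf r s d)"

lemma R_sum_wf: "R_sum G r s = (\<Sum>x\<in>carrier G. wf r s (group.ord G x))"
  unfolding R_sum_def wf_def ..

lemma wf_pos: "d > 0 \<Longrightarrow> wf r s d > 0"
  unfolding wf_def by simp

lemma wf_1: "wf r s 1 = 1"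
  unfolding wf_def by simp

lemma wf_mult:
  assumes "coprime a b"
  shows "wf r s (a * b) = wf r s a * wf r s b"
proof -
  have "real (a*b) powr s = real a powr s * real b powr s"
    by (simp add: powr_mult)
  moreover have "real (totient (a*b)) powr r = real (totient a) powr r * real (totient b) powr r"
    using assms by (simp add: totient_mult_coprime powr_mult)
  ultimately show ?thesis unfolding wf_def by simp
qed

lemma totient_ratio:
  assumes "d dvd e" "e > 0"
  shows "real d * real (totient e) \<le> real e * real (totient d)"
proof -
  have d: "d > 0" using assms by (auto intro: dvd_pos_nat)
  have sub: "prime_factors d \<subseteq> prime_factors e"
    using assms d by (simp add: dvd_prime_factors)
  define f where "f = (\<lambda>p::nat. 1 - 1 / real p)"
  have f01: "0 \<le> f p \<and> f p \<le> 1" if "p \<in> prime_factors e" for p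
  proof -
    have "prime p" using that by auto
    then have "real p \<ge> 1" using prime_ge_1_nat by auto
    then show ?thesis unfolding f_def by (simp add: field_simps)
  qed
  have "prod f (prime_factors e) = prod f (prime_factors e - prime_factors d) * prod f (prime_factors d)"
    using sub by (simp add: prod.subset_diff)
  also have "\<dots> \<le> 1 * prod f (prime_factors d)"
    apply (rule mult_right_mono)
     apply (rule prod_le_1) using f01 apply blast
    apply (rule prod_nonneg) using f01 sub by blast
  finally have le: "prod f (prime_factors e) \<le> prod f (prime_factors d)" by simp
  have "real d * real (totient e) = real d * real e * prod f (prime_factors e)"
    by (simp add: totient_formula2 f_def)
  also have "\<dots> \<le> real d * real e * prod f (prime_factors d)"
    by (rule mult_left_mono[OF le]) simp
  also have "\<dots> = real e * real (totient d)"
    by (simp add: totient_formula2 f_def)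
  finally show ?thesis .
qed

context
  fixes r s :: real
  assumes s1: "1 \<le> s" and rs: "r \<le> s - 1"
begin

lemma wf_mono:
  assumes "d dvd e" "e > 0"
  shows "real e * wf r s d \<le> real d * wf r s e"
proof -
  have d0: "d > 0" using assms by (auto intro: dvd_pos_nat)
  define D where "D = real d"
  define E where "E = real e"
  define pd where "pd = real (totient d)"
  define pe where "pe = real (totient e)"
  have D1: "1 \<le> D" using d0 by (simp add: D_def)
  have DE: "D \<le> E" using assms by (simp add: D_def E_def dvd_imp_le)
  have pd0: "0 < pd" using d0 by (simp add: pd_def)
  have pdpe: "pd \<le> pe" using assms by (simp add: pd_def pe_def totient_dvd_mono)
  have rat: "D * pe \<le> E * pd" using totient_ratio[OF assms] by (simp add: D_def E_def pd_def pe_def)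
  have goal: "E * (D powr s / pd powr r) \<le> D * (E powr s / pe powr r)"
  proof (cases "r \<ge> 0")
    case True
    have "pe \<le> E * pd / D" using rat D1 by (simp add: field_simps)
    hence "pe powr r \<le> (E * pd / D) powr r" using True pd0 pdpe by (intro powr_mono2) auto
    also have "\<dots> = (E / D) powr r * pd powr r" using D1 DE pd0 by (simp add: powr_mult powr_divide)
    finally have A: "pe powr r \<le> (E / D) powr r * pd powr r" .
    have pepos: "0 < pe powr r" using pd0 pdpe by simp
    have "D powr (s - 1 - r) \<le> E powr (s - 1 - r)" using rs D1 DE by (intro powr_mono2) auto
    hence B: "E * D powr s \<le> D powr (1 + r) * E powr (s - r)"
    proof -
      assume h: "D powr (s - 1 - r) \<le> E powr (s - 1 - r)"
      have "E * D powr s = E * D powr (1 + r) * D powr (s - 1 - r)"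
        using D1 by (simp add: mult.assoc flip: powr_add)
      also have "\<dots> \<le> E * D powr (1 + r) * E powr (s - 1 - r)"
        using h D1 DE by (intro mult_left_mono) auto
      also have "\<dots> = D powr (1 + r) * E powr (s - r)"
      proof -
        have "D powr (1 + r) * E powr (s - r) = D powr (1 + r) * (E powr 1 * E powr (s - 1 - r))"
          using D1 DE by (simp only: flip: powr_add) simp
        thus ?thesis using D1 DE by simp
      qed
      finally show ?thesis .
    qed
    have "E * (D powr s / pd powr r) = (E * D powr s) / pd powr r" by simp
    also have "\<dots> \<le> D powr (1 + r) * E powr (s - r) / pd powr r"
      using B pd0 by (intro divide_right_mono) auto
    also have "\<dots> = D * E powr s / ((E / D) powr r * pd powr r)"
    proof -
      have "(E / D) powr r = E powr r / D powr r" using D1 DE by (simp add: powr_divide)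
      moreover have "D powr (1 + r) = D * D powr r" using D1 by (simp add: powr_add)
      moreover have "E powr (s - r) = E powr s / E powr r" using D1 DE by (simp add: powr_diff)
      ultimately show ?thesis using D1 DE pd0
        by (simp add: field_simps) (metis mult.assoc mult.commute)
    qed
    also have "\<dots> \<le> D * E powr s / pe powr r"
      using A pepos D1 DE pd0 by (intro divide_left_mono) (auto intro!: mult_pos_pos)
    finally show ?thesis by simp
  next
    case False
    have A: "pe powr r \<le> pd powr r" using False pd0 pdpe by (intro powr_mono2') auto
    have "D powr (s - 1) \<le> E powr (s - 1)" using s1 D1 DE by (intro powr_mono2) auto
    hence B: "E * D powr s \<le> D * E powr s"
    proof -
      assume h: "D powr (s - 1) \<le> E powr (s - 1)"
      have "E * D powr s = E * D * D powr (s - 1)" using D1 by (simp add: powr_diff)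
      also have "\<dots> \<le> E * D * E powr (s - 1)" using h D1 DE by (intro mult_left_mono) auto
      also have "\<dots> = D * E powr s" using D1 DE by (simp add: powr_diff)
      finally show ?thesis .
    qed
    have "E * (D powr s / pd powr r) \<le> D * E powr s / pd powr r"
      using B pd0 by (simp add: divide_right_mono)
    also have "\<dots> \<le> D * E powr s / pe powr r"
      using A pd0 pdpe D1 DE by (intro divide_left_mono) auto
    finally show ?thesis by simp
  qed
  thus ?thesis by (simp add: wf_def D_def E_def pd_def pe_def)
qed

lemma wf_dvd_le:
  assumes "d dvd e" "e > 0"
  shows "wf r s d \<le> wf r s e"
proof -
  have d0: "d > 0" using assms by (auto intro: dvd_pos_nat)
  have de: "d \<le> e" using assms by (simp add: dvd_imp_le)
  have "real e * wf r s d \<le> real d * wf r s e" by (rule wf_mono[OF assms])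
  moreover have "real d * wf r s d \<le> real e * wf r s d"
    using de wf_pos[OF d0, of r s] by (intro mult_right_mono) auto
  moreover have "real d * wf r s e \<le> real d * wf r s e" by simp
  ultimately have "real d * wf r s d \<le> real d * wf r s e" by linarith
  thus ?thesis using d0 by simp
qed

lemma wf_strict:
  assumes "d dvd e" "e > 0" "d \<noteq> e"
  shows "wf r s d < wf r s e"
proof -
  have d0: "d > 0" using assms by (auto intro: dvd_pos_nat)
  obtain k where k: "e = d * k" using assms by (auto elim: dvdE)
  have "k \<ge> 2" using k assms by (cases k; cases "k - 1") auto
  hence "real d * 2 \<le> real d * real k" by (intro mult_left_mono) auto
  hence "real e \<ge> 2 * real d" using k by (simp add: mult.commute)
  hence "2 * real d * wf r s d \<le> real e * wf r s d"
    using wf_pos[OF d0, of r s] by (intro mult_right_mono) auto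
  also have "\<dots> \<le> real d * wf r s e" by (rule wf_mono[OF assms(1,2)])
  finally have "real d * (2 * wf r s d) \<le> real d * wf r s e" by (simp add: mult.assoc mult.left_commute)
  hence "2 * wf r s d \<le> wf r s e" using d0 by simp
  thus ?thesis using wf_pos[OF d0, of r s] by linarith
qed

end

lemma sum_gcd_identity:
  fixes h :: "nat \<Rightarrow> real"
  assumes N: "N > 0"
  shows "(\<Sum>i<N. h (N div gcd N i)) = (\<Sum>d | d dvd N. real (totient d) * h d)"
proof -
  have 1: "(\<Sum>i<N. h (N div gcd N i)) = (\<Sum>k\<in>{0<..N}. h (N div gcd k N))"
    apply (rule sum.reindex_bij_witness[of _ "\<lambda>k. k mod N" "\<lambda>i. if i = 0 then N else i"])
    using N by (auto simp: gcd.commute le_less)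
  have fin: "finite {d. d dvd N}" using N by simp
  have 2: "(\<Sum>k\<in>{0<..N}. h (N div gcd k N)) =
      (\<Sum>d | d dvd N. (\<Sum>k\<in>{k. k \<in> {0<..N} \<and> gcd k N = d}. h (N div gcd k N)))"
    by (rule sum.group[symmetric]) (use N in auto)
  also have "\<dots> = (\<Sum>d | d dvd N. real (card {k\<in>{0<..N}. gcd k N = d}) * h (N div d))"
    by (intro sum.cong refl) simp
  also have "\<dots> = (\<Sum>d | d dvd N. real (totient (N div d)) * h (N div d))"
    using card_gcd_eq_totient[OF N] by (intro sum.cong refl) simp
  also have "\<dots> = (\<Sum>d | d dvd N. real (totient d) * h d)"
    using N by (intro sum.reindex_bij_witness[of _ "(div) N" "(div) N"]) (auto elim: dvdE)
  finally show ?thesis using 1 by simp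
qed

lemma H1: fixes a b x y :: nat assumes "coprime a b" "x dvd a" "y dvd b" shows "gcd (x * y) a = x"
  by (metis assms(1,2,3) coprime_mult_right_iff dvd_mult_div_cancel
    gcd_mult_left_right_cancel gcd_nat.order_iff)

lemma H3: fixes a b d :: nat assumes "coprime a b" "d dvd a * b" shows "gcd d a * gcd d b = d"
  by (smt (verit, del_insts) assms(1,2) coprime_mult_right_iff
    division_decomp dvd_mult_div_cancel gcd.commute
    gcd_mult_right_left_cancel gcd_mult_right_right_cancel
    gcd_nat.absorb_iff2 is_unit_gcd)

lemma divisors_mult_bij:
  fixes a b :: nat
  assumes "coprime a b"
  shows "bij_betw (\<lambda>(x, y). x * y) ({d. d dvd a} \<times> {d. d dvd b}) {d. d dvd a * b}"
proof -
  have H2: "gcd (x * y) b = y" if "x dvd a" "y dvd b" for x y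
    using H1[of b a y x] assms that by (simp add: coprime_commute mult.commute)
  show ?thesis
    by (rule bij_betw_byWitness[where f' = "\<lambda>d. (gcd d a, gcd d b)"])
       (auto simp: H1[OF assms] H2 H3[OF assms] intro: mult_dvd_mono)
qed

lemma Wf_mult:
  assumes "coprime a b"
  shows "Wf r s (a * b) = Wf r s a * Wf r s b"
proof -
  define g where "g = (\<lambda>d. real (totient d) * wf r s d)"
  have W: "Wf r s n = sum g {d. d dvd n}" for n unfolding Wf_def g_def by simp
  have 1: "(\<Sum>p\<in>{d. d dvd a} \<times> {d. d dvd b}. g ((\<lambda>(x, y). x * y) p)) = sum g {d. d dvd a * b}"
    by (rule sum.reindex_bij_betw[OF divisors_mult_bij[OF assms]])
  have 2: "(\<Sum>p\<in>{d. d dvd a} \<times> {d. d dvd b}. g ((\<lambda>(x, y). x * y) p))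
       = (\<Sum>p\<in>{d. d dvd a} \<times> {d. d dvd b}. (\<lambda>(x, y). g x * g y) p)"
  proof (rule sum.cong[OF refl])
    fix p assume p: "p \<in> {d. d dvd a} \<times> {d. d dvd b}"
    obtain x y where xy: "p = (x, y)" by (cases p)
    have "coprime x y" using assms p xy by (auto intro: coprime_divisors)
    hence "g (x * y) = g x * g y"
      unfolding g_def by (simp only: totient_mult_coprime wf_mult of_nat_mult) (simp only: mult_ac)
    thus "g ((\<lambda>(x, y). x * y) p) = (\<lambda>(x, y). g x * g y) p" using xy by simp
  qed
  have 3: "(\<Sum>p\<in>{d. d dvd a} \<times> {d. d dvd b}. (\<lambda>(x, y). g x * g y) p) = sum g {d. d dvd a} * sum g {d. d dvd b}"
    by (simp only: sum.cartesian_product[symmetric] sum_product)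
  show ?thesis using 1 2 3 W by metis
qed

lemma prod_telescope: "q \<ge> 1 \<Longrightarrow> (\<Prod>k\<in>{2..q}. 1 - 1 / real k) = 1 / real q"
proof (induction q rule: dec_induct)
  case base thus ?case by simp
next
  case (step q)
  have "{2..Suc q} = insert (Suc q) {2..q}" using step by auto
  hence "(\<Prod>k\<in>{2..Suc q}. 1 - 1 / real k) = (1 - 1 / real (Suc q)) * (1 / real q)"
    using step by simp
  also have "\<dots> = 1 / real (Suc q)" using step by (simp add: field_simps)
  finally show ?case .
qed

lemma n_le_q_totient:
  assumes "n > 1"
  shows "real n \<le> real (Max (prime_factors n)) * real (totient n)"
proof -
  define q where "q = Max (prime_factors n)"
  have ne: "prime_factors n \<noteq> {}" using assms by (simp add: prime_factorization_empty_iff)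
  have fin: "finite (prime_factors n)" by simp
  have qin: "q \<in> prime_factors n" unfolding q_def by (rule Max_in[OF fin ne])
  hence q2: "q \<ge> 2" using prime_ge_2_nat by auto
  have sub: "prime_factors n \<subseteq> {2..q}"
  proof
    fix p assume "p \<in> prime_factors n"
    thus "p \<in> {2..q}" unfolding q_def using prime_ge_2_nat Max_ge[OF fin] by auto
  qed
  define f where "f = (\<lambda>p::nat. 1 - 1 / real p)"
  have f01: "0 \<le> f p \<and> f p \<le> 1" if "p \<in> {2..q}" for p
    using that unfolding f_def by (auto simp: field_simps)
  have "prod f {2..q} = prod f ({2..q} - prime_factors n) * prod f (prime_factors n)"
    using sub by (simp add: prod.subset_diff)
  also have "\<dots> \<le> 1 * prod f (prime_factors n)"
    apply (rule mult_right_mono)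
     apply (rule prod_le_1) using f01 apply blast
    apply (rule prod_nonneg) using f01 sub by blast
  finally have le: "1 / real q \<le> prod f (prime_factors n)"
    using prod_telescope[of q] q2 by (simp add: f_def)
  have "real (totient n) = real n * prod f (prime_factors n)"
    by (simp add: totient_formula2 f_def)
  moreover have "1 \<le> real q * prod f (prime_factors n)" using le q2 by (simp add: field_simps)
  hence "real n * 1 \<le> real n * (real q * prod f (prime_factors n))" by (intro mult_left_mono) auto
  ultimately show ?thesis by (simp add: q_def mult_ac)
qed



lemma (in group) pow_mod_ord:
  assumes x: "x \<in> carrier G"
  shows "x [^] (i::nat) = x [^] (i mod ord x)"
proof -
  have "x [^] i = x [^] (ord x * (i div ord x) + i mod ord x)" by simp
  also have "\<dots> = x [^] (ord x * (i div ord x)) \<otimes> x [^] (i mod ord x)"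
    using x by (simp add: nat_pow_mult)
  also have "x [^] (ord x * (i div ord x)) = \<one>"
    using x by (simp add: pow_eq_id)
  finally show ?thesis using x by simp
qed

lemma (in group) ord_pow_dvd:
  assumes x: "x \<in> carrier G"
  shows "ord (x [^] (k::nat)) dvd ord x"
proof -
  have "(x [^] k) [^] ord x = \<one>"
    using x by (metis mult.commute nat_pow_one nat_pow_pow pow_ord_eq_1)
  thus ?thesis using x by (simp add: pow_eq_id)
qed

lemma (in group) ord_mult_coprime:
  assumes x: "x \<in> carrier G" and y: "y \<in> carrier G" and comm: "x \<otimes> y = y \<otimes> x"
    and cop: "coprime (ord x) (ord y)"
  shows "ord (x \<otimes> y) = ord x * ord y"
proof -
  define oo where "oo = ord (x \<otimes> y)"
  have xy: "x \<otimes> y \<in> carrier G" using x y by simp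
  have "(x \<otimes> y) [^] oo = \<one>" using xy by (simp add: oo_def)
  hence e: "x [^] oo \<otimes> y [^] oo = \<one>" using pow_mult_distrib[OF comm x y] by simp
  have ix: "inv (y [^] oo) = x [^] oo" by (rule inv_equality[OF e]) (use x y in simp_all)
  have e2: "y [^] oo \<otimes> x [^] oo = \<one>" using e x y by (metis inv_equality nat_pow_closed r_inv)
  have iy: "inv (x [^] oo) = y [^] oo" by (rule inv_equality[OF e2]) (use x y in simp_all)
  have A: "(y [^] oo) [^] ord y = \<one>" using y by (metis mult.commute nat_pow_one nat_pow_pow pow_ord_eq_1)
  have "(x [^] oo) [^] ord y = \<one>" using A ix y by (metis inv_one nat_pow_closed nat_pow_inv)
  hence "x [^] (oo * ord y) = \<one>" using x by (simp add: nat_pow_pow)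
  hence d1: "ord x dvd oo" using x cop by (simp add: pow_eq_id coprime_dvd_mult_left_iff)
  have B: "(x [^] oo) [^] ord x = \<one>" using x by (metis mult.commute nat_pow_one nat_pow_pow pow_ord_eq_1)
  have "(y [^] oo) [^] ord x = \<one>" using B iy x by (metis inv_one nat_pow_closed nat_pow_inv)
  hence "y [^] (oo * ord x) = \<one>" using y by (simp add: nat_pow_pow)
  hence d2: "ord y dvd oo" using y cop by (simp add: pow_eq_id coprime_dvd_mult_left_iff coprime_commute)
  have "ord x * ord y dvd oo" using d1 d2 cop by (simp add: divides_mult)
  moreover have "oo dvd ord x * ord y" unfolding oo_def by (rule ord_mul_divides[OF comm x y])
  ultimately show ?thesis unfolding oo_def by (simp add: dvd_antisym)
qed

lemma (in group) gen_inj: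
  assumes fin: "finite (carrier G)" and x: "x \<in> carrier G"
  shows "inj_on (\<lambda>i. x [^] i) {..<ord x}"
proof -
  have "{..<ord x} = {0..ord x - 1}" using ord_ge_1[OF fin x] by auto
  thus ?thesis using ord_inj[OF x] by simp
qed

lemma (in group) gen_carrier:
  assumes fin: "finite (carrier G)" and x: "x \<in> carrier G" and ox: "ord x = order G"
  shows "carrier G = (\<lambda>i. x [^] i) ` {..<order G}"
proof -
  have sub: "(\<lambda>i. x [^] i) ` {..<order G} \<subseteq> carrier G" using x by auto
  have "card ((\<lambda>i. x [^] i) ` {..<order G}) = order G"
    using gen_inj[OF fin x] ox by (simp add: card_image)
  hence "card ((\<lambda>i. x [^] i) ` {..<order G}) = card (carrier G)" by (simp add: order_def)
  thus ?thesis using card_subset_eq[OF fin sub] by simp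
qed

lemma (in group) gen_cyclic:
  assumes fin: "finite (carrier G)" and x: "x \<in> carrier G" and ox: "ord x = order G"
  shows "cyclic_group G"
proof -
  have "carrier G = range (\<lambda>n::int. x [^] n)"
  proof
    show "carrier G \<subseteq> range (\<lambda>n::int. x [^] n)"
    proof
      fix g assume "g \<in> carrier G"
      then obtain i where "g = x [^] (i::nat)" using gen_carrier[OF assms] by auto
      hence "g = x [^] (int i)" by (simp add: int_pow_int)
      thus "g \<in> range (\<lambda>n::int. x [^] n)" by blast
    qed
    show "range (\<lambda>n::int. x [^] n) \<subseteq> carrier G" using x by auto
  qed
  thus ?thesis using cyclic_group x by blast
qed

lemma (in group) gen_R:
  assumes fin: "finite (carrier G)" and x: "x \<in> carrier G" and ox: "ord x = order G"
  shows "R_sum G r s = Wf r s (order G)"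
proof -
  define N where "N = order G"
  have N0: "N > 0" using fin x unfolding N_def order_def by (auto simp: card_gt_0_iff)
  have "R_sum G r s = (\<Sum>g\<in>carrier G. wf r s (ord g))" by (simp add: R_sum_wf)
  also have "\<dots> = (\<Sum>i<N. wf r s (ord (x [^] i)))"
    using gen_carrier[OF assms] gen_inj[OF fin x] ox unfolding N_def by (simp add: sum.reindex)
  also have "\<dots> = (\<Sum>i<N. wf r s (N div gcd N i))"
    using ox N0 x by (intro sum.cong refl) (simp add: ord_pow_gen N_def)
  also have "\<dots> = Wf r s N" unfolding Wf_def by (rule sum_gcd_identity[OF N0])
  finally show ?thesis by (simp add: N_def)
qed

lemma (in group) cyclic_R:
  assumes fin: "finite (carrier G)" and cyc: "cyclic_group G"
  shows "R_sum G r s = Wf r s (order G)"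
proof -
  obtain x where x: "x \<in> carrier G" and gen: "subgroup_generated G {x} = G"
    using cyc unfolding cyclic_group_def by blast
  have "ord x = order G" using cyclic_order_is_ord[OF x] gen by simp
  thus ?thesis using gen_R[OF fin x] by simp
qed

lemma iso_ord:
  assumes G: "group G" and H: "group H" and h: "h \<in> iso G H" and x: "x \<in> carrier G"
  shows "group.ord H (h x) = group.ord G x"
proof -
  interpret G: group G by fact
  interpret H: group H by fact
  interpret gh: group_hom G H h
    using G H h by (simp add: group_hom_def group_hom_axioms_def iso_imp_homomorphism)
  have inj: "inj_on h (carrier G)" using h by (simp add: iso_iff)
  have "(h x [^]\<^bsub>H\<^esub> n = \<one>\<^bsub>H\<^esub>) = (G.ord x dvd n)" for n :: nat
  proof -
    have "h x [^]\<^bsub>H\<^esub> n = h (x [^]\<^bsub>G\<^esub> n)" using gh.hom_nat_pow x by simp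
    moreover have "h (x [^]\<^bsub>G\<^esub> n) = \<one>\<^bsub>H\<^esub> \<longleftrightarrow> x [^]\<^bsub>G\<^esub> n = \<one>\<^bsub>G\<^esub>"
      using inj_on_eq_iff[OF inj, of "x [^]\<^bsub>G\<^esub> n" "\<one>\<^bsub>G\<^esub>"] x gh.hom_one by simp
    ultimately show ?thesis using G.pow_eq_id[OF x] by simp
  qed
  thus ?thesis using H.ord_unique[of "h x"] x by simp
qed

lemma iso_R:
  assumes G: "group G" and H: "group H" and h: "h \<in> iso G H"
  shows "R_sum H r s = R_sum G r s"
proof -
  have bij: "bij_betw h (carrier G) (carrier H)" using h by (simp add: iso_def)
  have "R_sum H r s = (\<Sum>y\<in>carrier H. wf r s (group.ord H y))" by (simp add: R_sum_wf)
  also have "\<dots> = (\<Sum>x\<in>carrier G. wf r s (group.ord H (h x)))"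
    by (rule sum.reindex_bij_betw[OF bij, symmetric])
  also have "\<dots> = (\<Sum>x\<in>carrier G. wf r s (group.ord G x))"
    using iso_ord[OF G H h] by simp
  finally show ?thesis by (simp add: R_sum_wf)
qed



lemma (in group) inv_as_pow:
  assumes fin: "finite (carrier G)" and h: "h \<in> carrier G"
  shows "inv h = h [^] (ord h - 1)"
proof -
  have "h [^] (ord h - 1) \<otimes> h = h [^] (Suc (ord h - 1))" by simp
  also have "Suc (ord h - 1) = ord h" using ord_ge_1[OF fin h] by simp
  finally have "h [^] (ord h - 1) \<otimes> h = \<one>" using h by simp
  thus ?thesis by (rule inv_equality) (use h in simp_all)
qed

lemma (in group) all_in_gen:
  assumes fin: "finite (carrier G)" and q: "prime q" and x: "x \<in> carrier G"
    and big: "order G < q * ord x"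
    and g: "g \<in> carrier G" and gN: "g [^] (q ^ a) = \<one>"
  shows "g \<in> range (\<lambda>l::nat. x [^] l)"
proof (rule ccontr)
  define H where "H = range (\<lambda>l::nat. x [^] l)"
  assume "g \<notin> range (\<lambda>l::nat. x [^] l)"
  hence nin: "g \<notin> H" by (simp add: H_def)
  have Hc: "h \<in> H \<Longrightarrow> h \<in> carrier G" for h using x by (auto simp: H_def)
  have Hpow: "h \<in> H \<Longrightarrow> h [^] (e::nat) \<in> H" for h e
    using x by (auto simp: H_def nat_pow_pow)
  have Hmul: "h1 \<in> H \<Longrightarrow> h2 \<in> H \<Longrightarrow> h1 \<otimes> h2 \<in> H" for h1 h2
    using x by (auto simp: H_def nat_pow_mult)
  have Hinv: "h \<in> H \<Longrightarrow> inv h \<in> H" for h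
    using inv_as_pow[OF fin Hc] Hpow by metis
  have xH: "x [^] (l::nat) \<in> H" for l by (simp add: H_def)
  have key: False if d0: "d > 0" and dq: "d < q" and gd: "g [^] d \<in> H" for d :: nat
  proof -
    have "ord g dvd q ^ a" using gN g by (simp add: pow_eq_id)
    have "\<not> q dvd d" using d0 dq by (auto dest: dvd_imp_le)
    hence "coprime q d" by (rule prime_imp_coprime[OF q])
    hence "coprime d (q ^ a)" by (simp add: coprime_commute)
    hence cop: "coprime d (ord g)" by (rule coprime_divisors[OF dvd_refl \<open>ord g dvd q ^ a\<close>])
    obtain e where e: "[d * e = Suc 0] (mod ord g)" using cong_solve_coprime_nat[OF cop] by blast
    have "g = g [^] (Suc 0)" using g by simp
    also have "\<dots> = g [^] (Suc 0 mod ord g)" by (rule pow_mod_ord[OF g])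
    also have "\<dots> = g [^] ((d * e) mod ord g)" using e by (simp add: cong_def)
    also have "\<dots> = g [^] (d * e)" by (rule pow_mod_ord[OF g, symmetric])
    also have "\<dots> = (g [^] d) [^] e" using g by (simp add: nat_pow_pow)
    finally have geq: "g = (g [^] d) [^] e" .
    have "(g [^] d) [^] e \<in> H" by (rule Hpow[OF gd])
    thus False using nin geq by metis
  qed
  have eqcase: "i = i'" if eq: "g [^] i \<otimes> x [^] l = g [^] i' \<otimes> x [^] l'" and le: "i' \<le> i"
    and iq: "i < q" for i i' l l' :: nat
  proof (rule ccontr)
    assume "i \<noteq> i'"
    hence d0: "i - i' > 0" using le by simp
    have "g [^] i = g [^] i' \<otimes> g [^] (i - i')" using g le by (simp add: nat_pow_mult)
    hence "g [^] i' \<otimes> (g [^] (i - i') \<otimes> x [^] l) = g [^] i' \<otimes> x [^] l'"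
      using eq g x by (simp add: m_assoc)
    hence "g [^] (i - i') \<otimes> x [^] l = x [^] l'" using g x by (simp add: Units_eq)
    hence "g [^] (i - i') = x [^] l' \<otimes> inv (x [^] l)" using g x by (simp add: inv_solve_right)
    hence "g [^] (i - i') \<in> H" using Hmul Hinv xH by simp
    moreover have "i - i' < q" using iq by linarith
    ultimately show False using key[OF d0] by blast
  qed
  have inj: "inj_on (\<lambda>(i, l). g [^] i \<otimes> x [^] l) ({..<q} \<times> {..<ord x})"
  proof (rule inj_onI)
    fix p1 p2 assume p1: "p1 \<in> {..<q} \<times> {..<ord x}" and p2: "p2 \<in> {..<q} \<times> {..<ord x}"
      and eq0: "(\<lambda>(i, l). g [^] i \<otimes> x [^] l) p1 = (\<lambda>(i, l). g [^] i \<otimes> x [^] l) p2"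
    obtain i l where P1: "p1 = (i, l)" by (cases p1)
    obtain i' l' where P2: "p2 = (i', l')" by (cases p2)
    have A: "i < q" "l < ord x" "i' < q" "l' < ord x" using p1 p2 P1 P2 by auto
    have eq: "g [^] i \<otimes> x [^] l = g [^] i' \<otimes> x [^] l'" using eq0 P1 P2 by simp
    have ii: "i = i'"
    proof (cases "i' \<le> i")
      case True thus ?thesis using eqcase[OF eq] A by simp
    next
      case False thus ?thesis using eqcase[OF eq[symmetric]] A by simp
    qed
    hence "x [^] l = x [^] l'" using eq g x by (simp add: Units_eq)
    hence "l = l'" using gen_inj[OF fin x] A by (auto dest: inj_onD)
    thus "p1 = p2" using ii P1 P2 by simp
  qed
  have "(\<lambda>(i, l). g [^] i \<otimes> x [^] l) ` ({..<q} \<times> {..<ord x}) \<subseteq> carrier G"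
    using g x by auto
  hence "card ({..<q} \<times> {..<ord x}) \<le> card (carrier G)"
    by (rule card_inj_on_le[OF inj _ fin])
  hence "q * ord x \<le> order G" by (simp add: order_def card_cartesian_product)
  thus False using big by simp
qed

lemma (in group) conj_pow:
  assumes z: "z \<in> carrier G" and h: "h \<in> carrier G"
  shows "(z \<otimes> h \<otimes> inv z) [^] (n::nat) = z \<otimes> h [^] n \<otimes> inv z"
proof (induction n)
  case 0 thus ?case using z by simp
next
  case (Suc n)
  have "(z \<otimes> h \<otimes> inv z) [^] Suc n = (z \<otimes> h [^] n \<otimes> inv z) \<otimes> (z \<otimes> h \<otimes> inv z)"
    using Suc by simp
  also have "\<dots> = z \<otimes> (h [^] n \<otimes> (inv z \<otimes> z) \<otimes> h) \<otimes> inv z"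
  proof -
    have c: "inv z \<otimes> (z \<otimes> w) = w" if "w \<in> carrier G" for w
      using z that by (simp add: m_assoc[symmetric])
    show ?thesis using z h by (simp add: m_assoc c)
  qed
  also have "\<dots> = z \<otimes> h [^] Suc n \<otimes> inv z" using z h by simp
  finally show ?case .
qed

lemma (in group) cyc_sub:
  assumes fin: "finite (carrier G)" and x: "x \<in> carrier G" and Nx: "N dvd ord x" and N0: "N > 0"
    and all: "\<And>g. g \<in> carrier G \<Longrightarrow> g [^] N = \<one> \<Longrightarrow> g \<in> range (\<lambda>l::nat. x [^] l)"
  defines "y \<equiv> x [^] (ord x div N)" and "Q \<equiv> {g \<in> carrier G. g [^] N = \<one>}"
  shows "y \<in> carrier G" "ord y = N" "Q = (\<lambda>i. y [^] i) ` {..<N}" "Q \<lhd> G"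
proof -
  show yc: "y \<in> carrier G" using x by (simp add: y_def)
  define k where "k = ord x div N"
  have ox: "ord x = N * k" using Nx by (simp add: k_def)
  have k0: "k \<noteq> 0" using ox ord_ge_1[OF fin x] by auto
  show oy: "ord y = N" unfolding y_def k_def[symmetric]
    using ord_pow[OF x _ k0] ox N0 k0 by simp
  have yN: "(y [^] (i::nat)) [^] N = \<one>" for i
    using yc oy by (metis mult.commute nat_pow_one nat_pow_pow pow_ord_eq_1)
  show Qeq: "Q = (\<lambda>i. y [^] i) ` {..<N}"
  proof
    show "(\<lambda>i. y [^] i) ` {..<N} \<subseteq> Q" using yN yc by (auto simp: Q_def)
    show "Q \<subseteq> (\<lambda>i. y [^] i) ` {..<N}"
    proof
      fix g assume "g \<in> Q"
      hence g: "g \<in> carrier G" "g [^] N = \<one>" by (auto simp: Q_def)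
      obtain l :: nat where l: "g = x [^] l" using all[OF g] by blast
      have "x [^] (l * N) = \<one>" using g l x by (simp add: nat_pow_pow)
      hence "N * k dvd l * N" using x ox by (simp add: pow_eq_id)
      hence "k dvd l" using N0 by (simp add: mult.commute)
      then obtain i where i: "l = k * i" by (auto elim: dvdE)
      have "g = y [^] i" using l i x by (simp add: y_def k_def nat_pow_pow)
      also have "\<dots> = y [^] (i mod N)" using pow_mod_ord[OF yc] oy by simp
      finally show "g \<in> (\<lambda>i. y [^] i) ` {..<N}" using N0 by auto
    qed
  qed
  have sub: "subgroup Q G"
  proof (rule subgroupI)
    show "Q \<subseteq> carrier G" by (auto simp: Q_def)
    show "Q \<noteq> {}" using Qeq N0 by auto
    show "inv a \<in> Q" if "a \<in> Q" for a
      using that by (auto simp: Q_def nat_pow_inv)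
    show "a \<otimes> b \<in> Q" if ab: "a \<in> Q" "b \<in> Q" for a b
    proof -
      obtain i j :: nat where "a = y [^] i" "b = y [^] j" using ab Qeq by auto
      hence "a \<otimes> b = y [^] (i + j)" using yc by (simp add: nat_pow_mult)
      thus ?thesis using yN yc Qeq by (auto simp: Q_def)
    qed
  qed
  show "Q \<lhd> G"
    unfolding normal_inv_iff
  proof (intro conjI sub ballI)
    fix z h assume z: "z \<in> carrier G" and h: "h \<in> Q"
    hence hc: "h \<in> carrier G" "h [^] N = \<one>" by (auto simp: Q_def)
    have "(z \<otimes> h \<otimes> inv z) [^] N = \<one>" using conj_pow[OF z hc(1)] hc z by simp
    thus "z \<otimes> h \<otimes> inv z \<in> Q" using z hc by (simp add: Q_def)
  qed
qed



locale qsetup = group G for G :: "('a, 'b) monoid_scheme" (structure) +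
  fixes Q :: "'a set" and y :: 'a and N :: nat and r s :: real
  assumes fin: "finite (carrier G)" and nQ: "Q \<lhd> G" and y: "y \<in> carrier G"
    and oy: "ord y = N" and Qeq: "Q = (\<lambda>i. y [^] i) ` {..<N}"
    and cop: "coprime N (order (G Mod Q))" and N2: "N \<ge> 2"
    and s1: "1 \<le> s" and rs: "r \<le> s - 1"
begin

lemma GQ_group: "group (G Mod Q)"
  using nQ by (rule normal.factorgroup_is_group)

lemma Q_sub: "subgroup Q G" using nQ by (rule normal_imp_subgroup)

lemma Qc: "Q \<subseteq> carrier G" using Q_sub by (rule subgroup.subset)

lemma QN: "g \<in> Q \<Longrightarrow> g [^] N = \<one>"
  using Qeq y oy by (auto simp: nat_pow_pow) (metis mult.commute nat_pow_one nat_pow_pow pow_ord_eq_1)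

lemma carrier_GQ: "carrier (G Mod Q) = rcosets Q" by (simp add: FactGroup_def)

lemma finQ: "finite (carrier (G Mod Q))"
  using rcosets_subset_PowG[OF Q_sub] fin carrier_GQ by (metis finite_Pow_iff finite_subset)

lemma coset_in: "g \<in> carrier G \<Longrightarrow> Q #> g \<in> carrier (G Mod Q)"
  using Qc by (simp add: carrier_GQ rcosetsI)

lemma cosetpow: "g \<in> carrier G \<Longrightarrow> (Q #> g) [^]\<^bsub>G Mod Q\<^esub> (j::nat) = Q #> (g [^] j)"
  using nQ by (simp add: normal.FactGroup_pow)

lemma cosetone: "h \<in> carrier G \<Longrightarrow> (Q #> h = Q) \<longleftrightarrow> h \<in> Q"
proof
  assume h: "h \<in> carrier G" and "Q #> h = Q"
  thus "h \<in> Q" using rcos_self[OF h Q_sub] by simp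
next
  assume "h \<in> Q"
  thus "Q #> h = Q" using subgroup.rcos_const[OF Q_sub is_group] by simp
qed

lemma cpow_one: "g \<in> carrier G \<Longrightarrow> ((Q #> g) [^]\<^bsub>G Mod Q\<^esub> (j::nat) = \<one>\<^bsub>G Mod Q\<^esub>) \<longleftrightarrow> g [^] j \<in> Q"
  using cosetpow cosetone by simp

lemma F2:
  assumes g: "g \<in> carrier G"
  defines "k \<equiv> group.ord (G Mod Q) (Q #> g)"
  shows "k dvd ord g" "g [^] k \<in> Q" "k \<ge> 1" "ord g = k * ord (g [^] k)"
    "wf r s (ord g) = wf r s k * wf r s (ord (g [^] k))"
proof -
  interpret GQ: group "G Mod Q" by (rule GQ_group)
  have c: "Q #> g \<in> carrier (G Mod Q)" by (rule coset_in[OF g])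
  show kd: "k dvd ord g" unfolding k_def
    using GQ.pow_eq_id[OF c, of "ord g"] cpow_one[OF g] g subgroup.one_closed[OF Q_sub] by simp
  show gk: "g [^] k \<in> Q" unfolding k_def
    using GQ.pow_ord_eq_1[OF c] cpow_one[OF g] by simp
  show k1: "k \<ge> 1" unfolding k_def by (rule GQ.ord_ge_1[OF finQ c])
  have "ord (g [^] k) = ord g div k" using ord_pow[OF g kd] k1 by simp
  thus oeq: "ord g = k * ord (g [^] k)" using kd by simp
  have "k dvd order (G Mod Q)" unfolding k_def by (rule GQ.ord_dvd_group_order[OF c])
  moreover have "ord (g [^] k) dvd N" using QN[OF gk] g by (simp add: pow_eq_id)
  ultimately have "coprime k (ord (g [^] k))"
    using cop by (meson coprime_commute coprime_divisors)
  thus "wf r s (ord g) = wf r s k * wf r s (ord (g [^] k))"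
    using oeq by (simp add: wf_mult)
qed

lemma F3:
  assumes C: "C \<in> carrier (G Mod Q)"
  shows "\<exists>u \<in> carrier G. Q #> u = C \<and> u [^] group.ord (G Mod Q) C = \<one>"
proof -
  interpret GQ: group "G Mod Q" by (rule GQ_group)
  define k where "k = GQ.ord C"
  obtain g0 where g0: "g0 \<in> carrier G" and Cg: "C = Q #> g0"
    using C by (auto simp: carrier_GQ RCOSETS_def)
  have "k dvd order (G Mod Q)" unfolding k_def by (rule GQ.ord_dvd_group_order[OF C])
  hence "coprime N k" using cop by (meson coprime_divisors dvd_refl)
  then obtain b where b: "[N * b = Suc 0] (mod k)" using cong_solve_coprime_nat by blast
  define u where "u = g0 [^] (N * b)"
  have u: "u \<in> carrier G" using g0 by (simp add: u_def)
  have g0k: "g0 [^] k \<in> Q" using F2(2)[OF g0] Cg by (simp add: k_def)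
  have "u [^] k = ((g0 [^] k) [^] N) [^] b" using g0 by (simp add: u_def nat_pow_pow mult_ac)
  also have "\<dots> = \<one>" using QN[OF g0k] by simp
  finally have uk: "u [^] k = \<one>" .
  have "Q #> u = C [^]\<^bsub>G Mod Q\<^esub> (N * b)" using cosetpow[OF g0] Cg by (simp add: u_def)
  also have "\<dots> = C [^]\<^bsub>G Mod Q\<^esub> ((N * b) mod k)" unfolding k_def by (rule GQ.pow_mod_ord[OF C])
  also have "\<dots> = C [^]\<^bsub>G Mod Q\<^esub> (Suc 0 mod k)" using b by (simp add: cong_def k_def)
  also have "\<dots> = C [^]\<^bsub>G Mod Q\<^esub> (Suc 0)" unfolding k_def by (rule GQ.pow_mod_ord[OF C, symmetric])
  also have "\<dots> = C" using GQ.l_one[OF C] by simp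
  finally show ?thesis using u uk by (auto simp: k_def)
qed


lemma coset_image: "u \<in> carrier G \<Longrightarrow> Q #> u = (\<lambda>i. y [^] i \<otimes> u) ` {..<N}"
  by (auto simp: r_coset_def Qeq)

lemma coset_inj: "u \<in> carrier G \<Longrightarrow> inj_on (\<lambda>i. y [^] i \<otimes> u) {..<N}"
proof (rule inj_onI)
  fix i j assume u: "u \<in> carrier G" and ij: "i \<in> {..<N}" "j \<in> {..<N}"
    and eq: "y [^] i \<otimes> u = y [^] j \<otimes> u"
  hence "y [^] i = y [^] j" using y by simp
  thus "i = j" using gen_inj[OF fin y] oy ij by (auto dest: inj_onD)
qed

lemma yQ: "y \<in> Q"
proof -
  have "y [^] (1::nat) \<in> (\<lambda>i. y [^] i) ` {..<N}" by (rule imageI) (use N2 in simp)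
  thus ?thesis using Qeq y by simp
qed

lemma conj_c: "u \<in> carrier G \<Longrightarrow> \<exists>c::nat. u \<otimes> y = y [^] c \<otimes> u"
proof -
  assume u: "u \<in> carrier G"
  have "u \<otimes> y \<otimes> inv u \<in> Q" using normal.inv_op_closed2[OF nQ u yQ] .
  then obtain c :: nat where c: "u \<otimes> y \<otimes> inv u = y [^] c" using Qeq by auto
  have "u \<otimes> y = (u \<otimes> y \<otimes> inv u) \<otimes> u" using u y by (simp add: m_assoc)
  thus ?thesis using c by auto
qed

lemma comm_i:
  assumes u: "u \<in> carrier G" and c: "u \<otimes> y = y [^] (c::nat) \<otimes> u"
  shows "u \<otimes> y [^] (i::nat) = y [^] (i * c) \<otimes> u"
proof (induction i)
  case 0 thus ?case using u by simp
next
  case (Suc i)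
  have "u \<otimes> y [^] Suc i = (u \<otimes> y [^] i) \<otimes> y" using u y by (simp add: m_assoc)
  also have "\<dots> = y [^] (i * c) \<otimes> (u \<otimes> y)" using Suc u y by (simp add: m_assoc)
  also have "\<dots> = (y [^] (i * c) \<otimes> y [^] c) \<otimes> u" using c u y by (simp add: m_assoc)
  also have "\<dots> = y [^] (Suc i * c) \<otimes> u" using y by (simp add: nat_pow_mult add.commute)
  finally show ?case .
qed

lemma comm_j:
  assumes u: "u \<in> carrier G" and c: "u \<otimes> y = y [^] (c::nat) \<otimes> u"
  shows "u [^] (j::nat) \<otimes> y [^] (i::nat) = y [^] (i * c ^ j) \<otimes> u [^] j"
proof (induction j arbitrary: i)
  case 0 thus ?case using u y by simp
next
  case (Suc j)
  have "u [^] Suc j \<otimes> y [^] i = u [^] j \<otimes> (u \<otimes> y [^] i)" using u y by (simp add: m_assoc)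
  also have "\<dots> = (u [^] j \<otimes> y [^] (i * c)) \<otimes> u" using comm_i[OF u c] u y by (simp add: m_assoc)
  also have "\<dots> = y [^] (i * c * c ^ j) \<otimes> u [^] Suc j" using Suc u y by (simp add: m_assoc)
  also have "i * c * c ^ j = i * c ^ Suc j" by simp
  finally show ?case .
qed

lemma prod_j:
  assumes u: "u \<in> carrier G" and c: "u \<otimes> y = y [^] (c::nat) \<otimes> u"
  shows "(y [^] (i::nat) \<otimes> u) [^] (j::nat) = y [^] (i * (\<Sum>l<j. c ^ l)) \<otimes> u [^] j"
proof (induction j)
  case 0 thus ?case using u y by simp
next
  case (Suc j)
  have "(y [^] i \<otimes> u) [^] Suc j = y [^] (i * (\<Sum>l<j. c ^ l)) \<otimes> (u [^] j \<otimes> y [^] i) \<otimes> u"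
    using Suc u y by (simp add: m_assoc)
  also have "\<dots> = (y [^] (i * (\<Sum>l<j. c ^ l)) \<otimes> y [^] (i * c ^ j)) \<otimes> (u [^] j \<otimes> u)"
    using comm_j[OF u c] u y by (simp add: m_assoc)
  also have "\<dots> = y [^] (i * (\<Sum>l<Suc j. c ^ l)) \<otimes> u [^] Suc j"
    using u y by (simp add: nat_pow_mult distrib_left)
  finally show ?case .
qed


lemma sumY: "(\<Sum>i<N. wf r s (ord (y [^] i))) = Wf r s N"
proof -
  have N0: "N > 0" using N2 by simp
  have "(\<Sum>i<N. wf r s (ord (y [^] i))) = (\<Sum>i<N. wf r s (N div gcd N i))"
    using oy N0 y by (intro sum.cong refl) (simp add: ord_pow_gen)
  also have "\<dots> = Wf r s N" unfolding Wf_def by (rule sum_gcd_identity[OF N0])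
  finally show ?thesis .
qed

lemma T_eq:
  assumes u: "u \<in> carrier G" and uk: "u [^] k = \<one>" and c: "u \<otimes> y = y [^] (c::nat) \<otimes> u"
  shows "(\<Sum>g\<in>Q #> u. wf r s (ord (g [^] k))) = (\<Sum>i<N. wf r s (ord ((y [^] i) [^] (\<Sum>l<k. c ^ l))))"
proof -
  have "(\<Sum>g\<in>Q #> u. wf r s (ord (g [^] k))) = (\<Sum>i<N. wf r s (ord ((y [^] i \<otimes> u) [^] k)))"
    using coset_image[OF u] coset_inj[OF u] by (simp add: sum.reindex)
  also have "\<dots> = (\<Sum>i<N. wf r s (ord ((y [^] i) [^] (\<Sum>l<k. c ^ l))))"
    using prod_j[OF u c] uk y by (simp add: nat_pow_pow)
  finally show ?thesis .
qed

lemma T_le: "(\<Sum>i<N. wf r s (ord ((y [^] i) [^] (S::nat)))) \<le> Wf r s N"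
proof -
  have "(\<Sum>i<N. wf r s (ord ((y [^] i) [^] S))) \<le> (\<Sum>i<N. wf r s (ord (y [^] i)))"
  proof (rule sum_mono)
    fix i assume "i \<in> {..<N}"
    have yi: "y [^] i \<in> carrier G" using y by simp
    show "wf r s (ord ((y [^] i) [^] S)) \<le> wf r s (ord (y [^] i))"
      by (rule wf_dvd_le[OF s1 rs ord_pow_dvd[OF yi]]) (use ord_ge_1[OF fin yi] in simp)
  qed
  thus ?thesis using sumY by simp
qed

lemma T_eq_cop:
  assumes eq: "(\<Sum>i<N. wf r s (ord ((y [^] i) [^] (S::nat)))) = Wf r s N"
  shows "coprime S N"
proof -
  define f where "f i = wf r s (ord (y [^] i)) - wf r s (ord ((y [^] i) [^] S))" for i :: nat
  have f0: "\<forall>i\<in>{..<N}. 0 \<le> f i"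
  proof
    fix i assume "i \<in> {..<N}"
    have yi: "y [^] i \<in> carrier G" using y by simp
    have "wf r s (ord ((y [^] i) [^] S)) \<le> wf r s (ord (y [^] i))"
      by (rule wf_dvd_le[OF s1 rs ord_pow_dvd[OF yi]]) (use ord_ge_1[OF fin yi] in simp)
    thus "0 \<le> f i" by (simp add: f_def)
  qed
  have "sum f {..<N} = 0" using eq sumY by (simp add: f_def sum_subtractf)
  hence "\<forall>i\<in>{..<N}. f i = 0" using sum_nonneg_eq_0_iff[of "{..<N}" f] f0 by simp
  hence "f 1 = 0" using N2 by simp
  hence e1: "wf r s (ord (y [^] S)) = wf r s N" using y oy by (simp add: f_def)
  have dv: "ord (y [^] S) dvd N" using ord_pow_dvd[OF y] oy by simp
  have "ord (y [^] S) = N"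
  proof (rule ccontr)
    assume "ord (y [^] S) \<noteq> N"
    hence "wf r s (ord (y [^] S)) < wf r s N" using wf_strict[OF s1 rs dv] N2 by simp
    thus False using e1 by simp
  qed
  thus ?thesis using pow_ord_eq_ord_iff[OF fin y] oy by simp
qed

lemma commute_of_coprime:
  assumes u: "u \<in> carrier G" and uk: "u [^] k = \<one>" and c: "u \<otimes> y = y [^] (c::nat) \<otimes> u"
    and cp: "coprime (\<Sum>l<k. c ^ l) N"
  shows "u \<otimes> y = y \<otimes> u"
proof -
  have "u [^] k \<otimes> y [^] (1::nat) = y [^] (1 * c ^ k) \<otimes> u [^] k" by (rule comm_j[OF u c])
  hence yy: "y [^] (c ^ k) = y [^] (1::nat)" using uk y by simp
  have a: "y [^] (c ^ k) = y [^] (c ^ k mod N)" using pow_mod_ord[OF y, of "c ^ k"] unfolding oy .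
  have b: "y [^] (1::nat) = y [^] ((1::nat) mod N)" using pow_mod_ord[OF y, of 1] unfolding oy .
  have "y [^] (c ^ k mod N) = y [^] ((1::nat) mod N)" using a b yy by metis
  moreover have "c ^ k mod N \<in> {..<N}" "(1::nat) mod N \<in> {..<N}" using N2 by auto
  ultimately have "c ^ k mod N = 1 mod N" using gen_inj[OF fin y] unfolding oy by (auto dest: inj_onD)
  hence "[c ^ k = 1] (mod N)" by (simp add: cong_def)
  hence "[int c ^ k = 1] (mod int N)" using cong_int_iff[of "c ^ k" 1 N] by simp
  hence "int N dvd int c ^ k - 1" by (simp add: cong_iff_dvd_diff)
  also have "int c ^ k - 1 = (int c - 1) * (\<Sum>i<k. int c ^ i)" by (rule power_diff_1_eq)
  also have "(\<Sum>i<k. int c ^ i) = int (\<Sum>l<k. c ^ l)" by simp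
  finally have "int N dvd (int c - 1) * int (\<Sum>l<k. c ^ l)" .
  moreover have "coprime (int N) (int (\<Sum>l<k. c ^ l))" using cp by (metis coprime_commute coprime_int_iff)
  ultimately have "int N dvd int c - 1" by (metis coprime_dvd_mult_left_iff)
  hence "[int c = 1] (mod int N)" by (simp add: cong_iff_dvd_diff)
  hence "[c = 1] (mod N)" using cong_int_iff[of c 1 N] by simp
  hence "c mod N = 1 mod N" by (simp add: cong_def)
  hence "y [^] c = y [^] (1::nat)" using pow_mod_ord[OF y, of c] pow_mod_ord[OF y, of 1] oy by simp
  thus ?thesis using c y by simp
qed


definition tC :: "'a set \<Rightarrow> real" where
  "tC C = (\<Sum>g\<in>C. wf r s (ord (g [^] group.ord (G Mod Q) C)))"

lemma tC_split:
  assumes C: "C \<in> carrier (G Mod Q)"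
  shows "(\<Sum>g\<in>C. wf r s (ord g)) = wf r s (group.ord (G Mod Q) C) * tC C"
proof -
  obtain u where u: "u \<in> carrier G" and uC: "Q #> u = C" using F3[OF C] by blast
  have "(\<Sum>g\<in>C. wf r s (ord g)) = (\<Sum>g\<in>C. wf r s (group.ord (G Mod Q) C) * wf r s (ord (g [^] group.ord (G Mod Q) C)))"
  proof (rule sum.cong[OF refl])
    fix g assume gC: "g \<in> C"
    have g: "g \<in> carrier G" using gC uC u Qc r_coset_subset_G by blast
    have "Q #> u = Q #> g" using repr_independence[OF _ u Q_sub] gC uC by simp
    hence "Q #> g = C" using uC by simp
    thus "wf r s (ord g) = wf r s (group.ord (G Mod Q) C) * wf r s (ord (g [^] group.ord (G Mod Q) C))"
      using F2(5)[OF g] by simp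
  qed
  thus ?thesis by (simp add: tC_def sum_distrib_left)
qed

lemma tC_le:
  assumes C: "C \<in> carrier (G Mod Q)"
  shows "tC C \<le> Wf r s N"
proof -
  obtain u where u: "u \<in> carrier G" and uC: "Q #> u = C" and uk: "u [^] group.ord (G Mod Q) C = \<one>"
    using F3[OF C] by blast
  obtain c :: nat where c: "u \<otimes> y = y [^] c \<otimes> u" using conj_c[OF u] by blast
  have "tC C = (\<Sum>i<N. wf r s (ord ((y [^] i) [^] (\<Sum>l<group.ord (G Mod Q) C. c ^ l))))"
    unfolding tC_def using T_eq[OF u uk c] uC by simp
  thus ?thesis using T_le by simp
qed

lemma tC_eq:
  assumes C: "C \<in> carrier (G Mod Q)" and eq: "tC C = Wf r s N"
  shows "\<exists>u\<in>carrier G. Q #> u = C \<and> u [^] group.ord (G Mod Q) C = \<one> \<and> u \<otimes> y = y \<otimes> u"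
proof -
  obtain u where u: "u \<in> carrier G" and uC: "Q #> u = C" and uk: "u [^] group.ord (G Mod Q) C = \<one>"
    using F3[OF C] by blast
  obtain c :: nat where c: "u \<otimes> y = y [^] c \<otimes> u" using conj_c[OF u] by blast
  have "tC C = (\<Sum>i<N. wf r s (ord ((y [^] i) [^] (\<Sum>l<group.ord (G Mod Q) C. c ^ l))))"
    unfolding tC_def using T_eq[OF u uk c] uC by simp
  hence "coprime (\<Sum>l<group.ord (G Mod Q) C. c ^ l) N" using eq T_eq_cop by simp
  hence "u \<otimes> y = y \<otimes> u" by (rule commute_of_coprime[OF u uk c])
  thus ?thesis using u uC uk by blast
qed

lemma R_decomp:
  "R_sum G r s = (\<Sum>C\<in>carrier (G Mod Q). wf r s (group.ord (G Mod Q) C) * tC C)"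
proof -
  have "R_sum G r s = (\<Sum>g\<in>\<Union>(rcosets Q). wf r s (ord g))"
    using rcosets_part_G[OF Q_sub] by (simp add: R_sum_wf)
  also have "\<dots> = (\<Sum>C\<in>rcosets Q. \<Sum>g\<in>C. wf r s (ord g))"
  proof (subst sum.Union_disjoint)
    show "\<forall>A\<in>rcosets Q. finite A" using cosets_finite[OF _ Qc fin] by blast
    show "\<forall>A\<in>rcosets Q. \<forall>B\<in>rcosets Q. A \<noteq> B \<longrightarrow> A \<inter> B = {}"
      using rcos_disjoint[OF Q_sub] by (auto simp: pairwise_def disjnt_def)
  qed simp
  also have "\<dots> = (\<Sum>C\<in>carrier (G Mod Q). wf r s (group.ord (G Mod Q) C) * tC C)"
    using tC_split by (simp add: carrier_GQ)
  finally show ?thesis .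
qed

lemma core_le: "R_sum G r s \<le> Wf r s N * R_sum (G Mod Q) r s"
proof -
  interpret GQ: group "G Mod Q" by (rule GQ_group)
  have "R_sum G r s \<le> (\<Sum>C\<in>carrier (G Mod Q). wf r s (GQ.ord C) * Wf r s N)"
    unfolding R_decomp
  proof (rule sum_mono)
    fix C assume C: "C \<in> carrier (G Mod Q)"
    have "wf r s (GQ.ord C) > 0" using GQ.ord_ge_1[OF finQ C] wf_pos by simp
    thus "wf r s (GQ.ord C) * tC C \<le> wf r s (GQ.ord C) * Wf r s N"
      using tC_le[OF C] by simp
  qed
  also have "\<dots> = Wf r s N * R_sum (G Mod Q) r s"
    by (simp add: R_sum_wf sum_distrib_left mult.commute)
  finally show ?thesis .
qed

lemma card_Q: "card Q = N"
  using Qeq gen_inj[OF fin y] oy by (simp add: card_image)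

lemma order_G: "order G = order (G Mod Q) * N"
  using lagrange[OF Q_sub] card_Q by (simp add: order_def carrier_GQ)

lemma core_eq:
  assumes eq: "R_sum G r s = Wf r s N * R_sum (G Mod Q) r s" and cyc: "cyclic_group (G Mod Q)"
  shows "cyclic_group G"
proof -
  interpret GQ: group "G Mod Q" by (rule GQ_group)
  obtain C0 where C0: "C0 \<in> carrier (G Mod Q)" and gen: "subgroup_generated (G Mod Q) {C0} = G Mod Q"
    using cyc unfolding cyclic_group_def by blast
  have oC0: "GQ.ord C0 = order (G Mod Q)" using GQ.cyclic_order_is_ord[OF C0] gen by simp
  define f where "f C = wf r s (GQ.ord C) * (Wf r s N - tC C)" for C
  have f0: "\<forall>C\<in>carrier (G Mod Q). 0 \<le> f C"
  proof
    fix C assume C: "C \<in> carrier (G Mod Q)"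
    have "wf r s (GQ.ord C) > 0" using GQ.ord_ge_1[OF finQ C] wf_pos by simp
    thus "0 \<le> f C" using tC_le[OF C] by (simp add: f_def)
  qed
  have "sum f (carrier (G Mod Q)) = Wf r s N * (\<Sum>C\<in>carrier (G Mod Q). wf r s (GQ.ord C))
      - (\<Sum>C\<in>carrier (G Mod Q). wf r s (GQ.ord C) * tC C)"
    by (simp add: f_def sum_distrib_left sum_subtractf algebra_simps)
  also have "\<dots> = Wf r s N * R_sum (G Mod Q) r s - R_sum G r s"
    by (simp only: R_decomp R_sum_wf[of "G Mod Q"])
  finally have "sum f (carrier (G Mod Q)) = Wf r s N * R_sum (G Mod Q) r s - R_sum G r s" .
  hence "sum f (carrier (G Mod Q)) = 0" using eq by linarith
  hence "f C0 = 0" using sum_nonneg_eq_0_iff[OF finQ, of f] f0 C0 by simp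
  moreover have "wf r s (GQ.ord C0) > 0" using GQ.ord_ge_1[OF finQ C0] wf_pos by simp
  ultimately have "tC C0 = Wf r s N" by (simp add: f_def)
  then obtain u where u: "u \<in> carrier G" and uC: "Q #> u = C0"
    and uk: "u [^] GQ.ord C0 = \<one>" and comm: "u \<otimes> y = y \<otimes> u"
    using tC_eq[OF C0] by blast
  have "ord u = GQ.ord (Q #> u) * ord (u [^] GQ.ord (Q #> u))" by (rule F2(4)[OF u])
  hence ou: "ord u = order (G Mod Q)" using uC uk oC0 by simp
  have "coprime (ord u) (ord y)" using cop ou oy by (simp add: coprime_commute)
  hence "ord (u \<otimes> y) = order (G Mod Q) * N" using ord_mult_coprime[OF u y comm] ou oy by simp
  hence "ord (u \<otimes> y) = order G" using order_G by simp
  thus ?thesis using gen_cyclic[OF fin] u y by (meson m_closed)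
qed

end



lemma wf_nonneg: "0 \<le> wf r s d"
  unfolding wf_def by simp

lemma wf_Suc0: "wf r s (Suc 0) = 1" using wf_1[of r s] by simp

lemma Wf_ge1: assumes "n > 0" shows "1 \<le> Wf r s n"
proof -
  have "(\<Sum>d\<in>{1}. real (totient d) * wf r s d) \<le> (\<Sum>d | d dvd n. real (totient d) * wf r s d)"
  proof (rule sum_mono2)
    show "finite {d. d dvd n}" using assms by simp
    show "{1} \<subseteq> {d. d dvd n}" by simp
    show "0 \<le> real (totient b) * wf r s b" for b using wf_nonneg[of r s b] by simp
  qed
  thus ?thesis by (simp add: Wf_def wf_1 wf_Suc0)
qed

lemma Wf_ge: assumes "n > 1" shows "real (totient n) * wf r s n + 1 \<le> Wf r s n"
proof -
  have "(\<Sum>d\<in>{1, n}. real (totient d) * wf r s d) \<le> (\<Sum>d | d dvd n. real (totient d) * wf r s d)"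
  proof (rule sum_mono2)
    show "finite {d. d dvd n}" using assms by simp
    show "{1, n} \<subseteq> {d. d dvd n}" by simp
    show "0 \<le> real (totient b) * wf r s b" for b using wf_nonneg[of r s b] by simp
  qed
  thus ?thesis using assms by (simp add: Wf_def wf_1 wf_Suc0)
qed

context
  fixes r s :: real
  assumes s1: "1 \<le> s" and rs: "r \<le> s - 1"
begin

lemma big_elem:
  assumes grp: "group G" and fin: "finite (carrier G)" and n1: "order G > 1"
    and ge: "Wf r s (order G) \<le> R_sum G r s"
  shows "\<exists>x\<in>carrier G. order G < Max (prime_factors (order G)) * group.ord G x"
proof (rule ccontr)
  interpret group G by (rule grp)
  define n where "n = order G"
  define q where "q = Max (prime_factors n)"
  assume "\<not> (\<exists>x\<in>carrier G. order G < Max (prime_factors (order G)) * ord x)"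
  hence small: "\<forall>x\<in>carrier G. q * ord x \<le> n" by (auto simp: n_def q_def not_less)
  have n0: "n > 0" using n1 by (simp add: n_def)
  have ne: "prime_factors n \<noteq> {}" using n1 by (simp add: n_def prime_factorization_empty_iff)
  have "q \<in> prime_factors n" unfolding q_def by (rule Max_in[OF _ ne]) simp
  hence q0: "q > 0" using prime_gt_0_nat by auto
  have each: "real q * wf r s (ord x) \<le> wf r s n" if x: "x \<in> carrier G" for x
  proof -
    have dv: "ord x dvd n" using ord_dvd_group_order[OF x] by (simp add: n_def)
    have m: "real n * wf r s (ord x) \<le> real (ord x) * wf r s n" by (rule wf_mono[OF s1 rs dv n0])
    have "real q * real (ord x) \<le> real n" using small x by (metis of_nat_le_iff of_nat_mult)
    hence "real q * real (ord x) * wf r s n \<le> real n * wf r s n"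
      using wf_pos[OF n0, of r s] by (intro mult_right_mono) auto
    hence "real n * (real q * wf r s (ord x)) \<le> real n * wf r s n"
      using m by (smt (verit) mult.assoc mult.commute mult_left_mono of_nat_0_le_iff)
    thus ?thesis using n0 by simp
  qed
  have "real q * R_sum G r s = (\<Sum>x\<in>carrier G. real q * wf r s (ord x))"
    by (simp add: R_sum_wf sum_distrib_left)
  also have "\<dots> \<le> (\<Sum>x\<in>carrier G. wf r s n)" by (rule sum_mono) (rule each)
  also have "\<dots> = real n * wf r s n" by (simp add: n_def order_def)
  also have "\<dots> \<le> real q * real (totient n) * wf r s n"
    using n_le_q_totient[of n] n1 wf_pos[OF n0, of r s] by (simp add: n_def q_def mult_right_mono)
  finally have "R_sum G r s \<le> real (totient n) * wf r s n" using q0 by (simp add: mult.assoc)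
  also have "\<dots> < Wf r s n" using Wf_ge[of n r s] n1 by (simp add: n_def)
  finally show False using ge by (simp add: n_def)
qed


lemma main_ind:
  fixes G :: "'a monoid"
  assumes "group G" "finite (carrier G)"
  shows "R_sum G r s \<le> Wf r s (order G) \<and> (R_sum G r s = Wf r s (order G) \<longleftrightarrow> cyclic_group G)"
  using assms
proof (induction "order G" arbitrary: G rule: less_induct)
  case less
  interpret group G by (rule less.prems(1))
  have fin: "finite (carrier G)" by (rule less.prems(2))
  show ?case
  proof (cases "cyclic_group G")
    case True
    thus ?thesis using cyclic_R[OF fin True] by simp
  next
    case False
    define n where "n = order G"
    have "R_sum G r s < Wf r s n"
    proof (rule ccontr)
      assume "\<not> R_sum G r s < Wf r s n"
      hence ge: "Wf r s n \<le> R_sum G r s" by simp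
      have n0: "n > 0" using fin by (simp add: n_def order_gt_0_iff_finite)
      have n1: "n > 1"
      proof (rule ccontr)
        assume "\<not> n > 1"
        hence "ord \<one>\<^bsub>G\<^esub> = order G" using n0 by (simp add: n_def)
        thus False using gen_cyclic[OF fin one_closed] False by simp
      qed
      obtain x where x: "x \<in> carrier G" and big: "n < Max (prime_factors n) * ord x"
        using big_elem[OF less.prems(1) fin _ ge[unfolded n_def]] n1 by (auto simp: n_def)
      define q where "q = Max (prime_factors n)"
      have ne: "prime_factors n \<noteq> {}" using n1 by (simp add: prime_factorization_empty_iff)
      have qpf: "q \<in> prime_factors n" unfolding q_def by (rule Max_in[OF _ ne]) simp
      hence q: "prime q" and ma: "multiplicity q n > 0" by (auto simp: prime_factors_multiplicity)
      define a where "a = multiplicity q n"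
      define N where "N = q ^ a"
      define m where "m = n div N"
      have Nn: "N dvd n" unfolding N_def a_def by (rule multiplicity_dvd)
      have nNm: "n = N * m" using Nn by (simp add: m_def)
      have qm: "\<not> q dvd m" unfolding m_def N_def a_def by (rule multiplicity_decompose) (use n0 q in \<open>auto simp: prime_gt_1_nat\<close>)
      have q2: "q \<ge> 2" using q by (simp add: prime_ge_2_nat)
      have N2: "N \<ge> 2"
      proof -
        have "q ^ 1 \<le> q ^ a" using ma q2 by (intro power_increasing) (auto simp: a_def)
        thus ?thesis using q2 by (simp add: N_def)
      qed
      have copNm: "coprime N m" using prime_imp_coprime[OF q qm] by (simp add: N_def)
      have oxn: "ord x dvd n" using ord_dvd_group_order[OF x] by (simp add: n_def)
      define t where "t = n div ord x"
      have nt: "n = ord x * t" using oxn by (simp add: t_def)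
      have t0: "t > 0" using nt n0 by (cases t) auto
      have tq: "t < q" using big nt by (simp add: q_def mult.commute)
      have "\<not> q dvd t" using t0 tq by (auto dest: dvd_imp_le)
      hence "coprime N t" using prime_imp_coprime[OF q] by (simp add: N_def)
      moreover have "N dvd ord x * t" using Nn nt by simp
      ultimately have Nox: "N dvd ord x" by (simp add: coprime_dvd_mult_left_iff)
      have big': "order G < q * ord x" using big by (simp add: n_def q_def)
      have all: "g \<in> range (\<lambda>l::nat. x [^]\<^bsub>G\<^esub> l)" if "g \<in> carrier G" "g [^]\<^bsub>G\<^esub> N = \<one>\<^bsub>G\<^esub>" for g
        using all_in_gen[OF fin q x big' that(1)] that(2) by (simp add: N_def)
      define y where "y = x [^]\<^bsub>G\<^esub> (ord x div N)"
      define Q where "Q = {g \<in> carrier G. g [^]\<^bsub>G\<^esub> N = \<one>\<^bsub>G\<^esub>}"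
      have N0: "N > 0" using N2 by simp
      have csall: "y \<in> carrier G \<and> ord y = N \<and> Q = (\<lambda>i. y [^]\<^bsub>G\<^esub> i) ` {..<N} \<and> Q \<lhd> G"
        unfolding y_def Q_def using cyc_sub[OF fin x Nox N0 all] by blast
      have cs: "y \<in> carrier G" "ord y = N" "Q = (\<lambda>i. y [^]\<^bsub>G\<^esub> i) ` {..<N}" "Q \<lhd> G"
        using csall by auto
      have cardQ: "card Q = N" using cs(3) gen_inj[OF fin cs(1)] cs(2) by (simp add: card_image)
      have ordGQ: "order (G Mod Q) = m"
      proof -
        have "card (rcosets\<^bsub>G\<^esub> Q) * card Q = order G"
          by (rule lagrange[OF normal_imp_subgroup[OF cs(4)]])
        hence "card (rcosets\<^bsub>G\<^esub> Q) * N = N * m" using cardQ nNm by (simp add: n_def)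
        hence "card (rcosets\<^bsub>G\<^esub> Q) = m" using N0 by simp
        thus ?thesis by (simp add: order_def FactGroup_def)
      qed
      have copGQ: "coprime N (order (G Mod Q))" using ordGQ copNm by simp
      interpret qs: qsetup G Q y N r s
        by (rule qsetup.intro[OF less.prems(1) qsetup_axioms.intro[OF fin cs(4) cs(1) cs(2) cs(3) _ N2 s1 rs]])
           (rule copGQ)
      define F where "F = flatten (G Mod Q) (\<lambda>U. SOME g. g \<in> U)"
      have grpF: "group F" unfolding F_def by (rule normal.flatten_set_group_mod[OF cs(4)])
      have isoF: "(\<lambda>U. SOME g. g \<in> U) \<in> iso (G Mod Q) F"
        unfolding F_def by (rule normal.flatten_set_group_mod_iso[OF cs(4)])
      have isF: "G Mod Q \<cong> F" by (rule is_isoI[OF isoF])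
      have ordF: "order F = m" using iso_same_card[OF isF] ordGQ by (simp add: order_def)
      have finF: "finite (carrier F)" using iso_finite[OF isF] qs.finQ by simp
      have m0: "m > 0" using nNm n0 by (cases m) auto
      have "1 * m < N * m" using N2 m0 by (intro mult_strict_right_mono) auto
      hence mn: "m < n" by (simp add: nNm)
      have IH: "R_sum F r s \<le> Wf r s m \<and> (R_sum F r s = Wf r s m \<longleftrightarrow> cyclic_group F)"
        using less.hyps[of F] grpF finF ordF mn by (simp add: n_def)
      have RF: "R_sum F r s = R_sum (G Mod Q) r s" by (rule iso_R[OF qs.GQ_group grpF isoF])
      have cycF: "cyclic_group F \<longleftrightarrow> cyclic_group (G Mod Q)"
        using isomorphic_group_cyclicity[OF isF qs.GQ_group grpF] by simp
      have WfN: "Wf r s N \<ge> 1" using Wf_ge1[OF N0] .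
      have le1: "R_sum G r s \<le> Wf r s N * R_sum (G Mod Q) r s" by (rule qs.core_le)
      have le2: "Wf r s N * R_sum (G Mod Q) r s \<le> Wf r s N * Wf r s m"
        using IH RF WfN by (intro mult_left_mono) auto
      have Wn: "Wf r s n = Wf r s N * Wf r s m" using Wf_mult[OF copNm] nNm by simp
      have e1: "R_sum G r s = Wf r s N * R_sum (G Mod Q) r s" using ge le1 le2 Wn by linarith
      have "Wf r s N * R_sum (G Mod Q) r s = Wf r s N * Wf r s m" using ge le1 le2 Wn by linarith
      hence "R_sum (G Mod Q) r s = Wf r s m" using WfN by simp
      hence "cyclic_group (G Mod Q)" using IH RF cycF by simp
      hence "cyclic_group G" by (rule qs.core_eq[OF e1])
      thus False using False by simp
    qed
    thus ?thesis using False by (simp add: n_def)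
  qed
qed

end

lemma integer_mod_R:
  assumes n: "n > 0"
  shows "R_sum (integer_mod_group n) r s = Wf r s n"
proof -
  interpret Z: group "integer_mod_group n" by simp
  have car: "carrier (integer_mod_group n) = {0..<int n}" using n by (simp add: carrier_integer_mod_group)
  have fin: "finite (carrier (integer_mod_group n))" using car by simp
  have ordZ: "order (integer_mod_group n) = n" using car by (simp add: order_def)
  define x where "x = 1 mod int n"
  have x: "x \<in> carrier (integer_mod_group n)" using car n by (simp add: x_def)
  have "Z.ord x = n"
  proof (subst Z.ord_unique[OF x], intro allI)
    fix k :: nat
    have "x [^]\<^bsub>integer_mod_group n\<^esub> k = int k mod int n"
      unfolding x_def pow_integer_mod_group by (metis mod_mult_right_eq mult.right_neutral)
    moreover have "(int k mod int n = 0) = (n dvd k)"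
      by (metis dvd_eq_mod_eq_0 of_nat_eq_0_iff of_nat_mod)
    ultimately show "(x [^]\<^bsub>integer_mod_group n\<^esub> k = \<one>\<^bsub>integer_mod_group n\<^esub>) = (n dvd k)"
      by (simp only: one_integer_mod_group)
  qed
  thus ?thesis using Z.gen_R[OF fin x] ordZ by simp
qed

theorem mainTheorem6:
  fixes G :: "('a, 'b) monoid_scheme" and r s :: real
  assumes "group G" and "finite (carrier G)"
    and "s \<ge> 1" and "r \<le> s - 1"
  shows "T_diff G r s \<le> 0 \<and> (T_diff G r s = 0 \<longleftrightarrow> cyclic_group G)"
proof -
  interpret group G by fact
  define G0 :: "'a monoid" where "G0 = \<lparr>carrier = carrier G, mult = mult G, one = one G\<rparr>"
  have mon: "monoid G0"
    using is_monoid unfolding G0_def monoid_def by simp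
  have isoG: "(\<lambda>x. x) \<in> iso G G0"
    by (simp add: iso_def hom_def G0_def bij_betw_def)
  have isG: "G \<cong> G0" by (rule is_isoI[OF isoG])
  have grp0: "group G0" by (rule iso_imp_group[OF isG mon])
  have fin0: "finite (carrier G0)" using assms(2) by (simp add: G0_def)
  have ord0: "order G0 = order G" by (simp add: G0_def order_def)
  have R0: "R_sum G0 r s = R_sum G r s" by (rule iso_R[OF is_group grp0 isoG])
  have cyc0: "cyclic_group G \<longleftrightarrow> cyclic_group G0"
    by (rule isomorphic_group_cyclicity[OF isG is_group grp0])
  have n0: "order G > 0" using assms(2) by (simp add: order_gt_0_iff_finite)
  have M: "R_sum G0 r s \<le> Wf r s (order G0) \<and> (R_sum G0 r s = Wf r s (order G0) \<longleftrightarrow> cyclic_group G0)"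
    by (rule main_ind[OF assms(3,4) grp0 fin0])
  have "T_diff G r s = R_sum G r s - Wf r s (order G)"
    unfolding T_diff_def using integer_mod_R[OF n0] by simp
  thus ?thesis using M R0 ord0 cyc0 by auto
qed

end
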